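(* Let $f$ be a deterministic voting rule whose utilitarian distortion on instances with $m$ alternatives is $o(m^2\sqrt m)$ as $m\to\infty$. Then for all sufficiently large $m$, the metric distortion of $f$ on instances with $m$ alternatives is strictly greater than $3$.
   Context: Setting: $n$ agents, $m$ alternatives, each agent has a strict ranking; a deterministic voting rule maps each profile to one alternative. Metric framework: pseudometric $d$ on agents and alternatives, consistent with profile $\vec\sigma$ if $X\succ_iY\Rightarrow d(i,X)\le d(i,Y)$; $\mathrm{SC}(X,d)=\sum_id(i,X)$; the metric distortion of $f$ (for given $m$) is $\sup$ over profiles with $m$ alternatives and consistent $d$ of $\mathrm{SC}(f(\vec\sigma),d)/\min_X\mathrm{SC}(X,d)$. Utilitarian framework: unit-sum nonnegative utilities $u_i$ ($\sum_Xu_i(X)=1$), consistent if $X\succ_iY\Rightarrow u_i(X)\ge u_i(Y)$; $\mathrm{SW}(X,\vec u)=\sum_iu_i(X)$; the utilitarian distortion of $f$ (for given $m$) is $\sup$ over profiles with $m$ alternatives and consistent $\vec u$ of $\max_X\mathrm{SW}(X,\vec u)/\mathrm{SW}(f(\vec\sigma),\vec u)$. *)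

theory Defs
  imports Complex_Main "HOL-Library.Extended_Real"
begin

text \<open>Alternatives are 0..<m, agents are 0..<n. A profile is a list of n rankings;
  a ranking is a list enumerating all alternatives, most preferred first.\<close>

definition is_ranking :: "nat \<Rightarrow> nat list \<Rightarrow> bool" where
  "is_ranking m r \<longleftrightarrow> distinct r \<and> set r = {..<m}"

definition valid_profile :: "nat \<Rightarrow> nat list list \<Rightarrow> bool" where
  "valid_profile m P \<longleftrightarrow> m \<ge> 1 \<and> P \<noteq> [] \<and> (\<forall>r\<in>set P. is_ranking m r)"

definition prefers :: "nat list \<Rightarrow> nat \<Rightarrow> nat \<Rightarrow> bool" where
  "prefers r X Y \<longleftrightarrow> (\<exists>k l. k < l \<and> l < length r \<and> r ! k = X \<and> r ! l = Y)"

definition voting_rule :: "(nat \<Rightarrow> nat list list \<Rightarrow> nat) \<Rightarrow> bool" where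
  "voting_rule f \<longleftrightarrow> (\<forall>m P. valid_profile m P \<longrightarrow> f m P < m)"

text \<open>Points of the metric space: agents Inl i, alternatives Inr X.\<close>
definition points :: "nat \<Rightarrow> nat \<Rightarrow> (nat + nat) set" where
  "points n m = Inl ` {..<n} \<union> Inr ` {..<m}"

definition pseudometric_on :: "'a set \<Rightarrow> ('a \<Rightarrow> 'a \<Rightarrow> real) \<Rightarrow> bool" where
  "pseudometric_on S d \<longleftrightarrow>
     (\<forall>x\<in>S. d x x = 0) \<and>
     (\<forall>x\<in>S. \<forall>y\<in>S. 0 \<le> d x y \<and> d x y = d y x) \<and>
     (\<forall>x\<in>S. \<forall>y\<in>S. \<forall>z\<in>S. d x z \<le> d x y + d y z)"

definition metric_consistent :: "nat \<Rightarrow> nat list list \<Rightarrow> ((nat + nat) \<Rightarrow> (nat + nat) \<Rightarrow> real) \<Rightarrow> bool" where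
  "metric_consistent m P d \<longleftrightarrow>
     pseudometric_on (points (length P) m) d \<and>
     (\<forall>i<length P. \<forall>X<m. \<forall>Y<m. prefers (P ! i) X Y \<longrightarrow> d (Inl i) (Inr X) \<le> d (Inl i) (Inr Y))"

definition SC :: "nat \<Rightarrow> nat list list \<Rightarrow> ((nat + nat) \<Rightarrow> (nat + nat) \<Rightarrow> real) \<Rightarrow> real" where
  "SC X P d = (\<Sum>i<length P. d (Inl i) (Inr X))"

definition utility_consistent :: "nat \<Rightarrow> nat list list \<Rightarrow> (nat \<Rightarrow> nat \<Rightarrow> real) \<Rightarrow> bool" where
  "utility_consistent m P u \<longleftrightarrow>
     (\<forall>i<length P. (\<forall>X<m. 0 \<le> u i X) \<and> (\<Sum>X<m. u i X) = 1) \<and>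
     (\<forall>i<length P. \<forall>X<m. \<forall>Y<m. prefers (P ! i) X Y \<longrightarrow> u i X \<ge> u i Y)"

definition SW :: "nat \<Rightarrow> nat list list \<Rightarrow> (nat \<Rightarrow> nat \<Rightarrow> real) \<Rightarrow> real" where
  "SW X P u = (\<Sum>i<length P. u i X)"

definition ratio :: "real \<Rightarrow> real \<Rightarrow> ereal" where
  "ratio a b = (if b = 0 then (if a = 0 then 1 else \<infinity>) else ereal (a / b))"

definition metric_distortion :: "(nat \<Rightarrow> nat list list \<Rightarrow> nat) \<Rightarrow> nat \<Rightarrow> ereal" where
  "metric_distortion f m = Sup {ratio (SC (f m P) P d) (Min ((\<lambda>X. SC X P d) ` {..<m})) | P d.
      valid_profile m P \<and> metric_consistent m P d}"

definition utilitarian_distortion :: "(nat \<Rightarrow> nat list list \<Rightarrow> nat) \<Rightarrow> nat \<Rightarrow> ereal" where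
  "utilitarian_distortion f m = Sup {ratio (Max ((\<lambda>X. SW X P u) ` {..<m})) (SW (f m P) P u) | P u.
      valid_profile m P \<and> utility_consistent m P u}"

end

theory Submission imports Defs "HOL-Library.Discrete_Functions" begin

definition atype :: "nat \<Rightarrow> nat" where
  "atype i = (if i < 2 then 0 else Suc (floor_log (i - 1)))"

definition rk :: "nat \<Rightarrow> nat \<Rightarrow> nat list" where
  "rk m t = (if t = 0 then [0..<m] else t # 0 # filter (\<lambda>x. x \<noteq> t) [1..<m])"

definition NN :: "nat \<Rightarrow> nat" where "NN m = 2^(m-1) + 1"

definition prof :: "nat \<Rightarrow> nat list list" where
  "prof m = map (\<lambda>i. rk m (atype i)) [0..<NN m]"

definition key :: "nat \<Rightarrow> nat \<Rightarrow> nat" where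
  "key t X = (if t = 0 then X else if X = t then 0 else if X = 0 then 1 else X + 1)"

lemma rk_sorted: "sorted_wrt (\<lambda>a b. key t a < key t b) (rk m t)"
proof (cases "t = 0")
  case True then show ?thesis by (simp add: rk_def key_def sorted_wrt_upt)
next
  case False
  have s: "sorted_wrt (<) (filter (\<lambda>x. x \<noteq> t) [1..<m])"
    by (rule sorted_wrt_filter) (simp add: sorted_wrt_upt)
  have "sorted_wrt (\<lambda>a b. key t a < key t b) (filter (\<lambda>x. x \<noteq> t) [1..<m])"
    by (rule sorted_wrt_mono_rel[OF _ s]) (auto simp: key_def False)
  then show ?thesis using False by (auto simp: rk_def key_def)
qed

lemma prefers_key: "prefers (rk m t) X Y \<Longrightarrow> key t X < key t Y"
  unfolding prefers_def using sorted_wrt_nth_less[OF rk_sorted] by blast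

lemma rk_ranking: "t < m \<Longrightarrow> is_ranking m (rk m t)"
  by (auto simp: is_ranking_def rk_def)

lemma atype_lt: assumes "m \<ge> 2" "i < NN m" shows "atype i < m"
proof (cases "i < 2")
  case False
  then have "i - 1 > 0" "i - 1 < 2^(m-1)" using assms by (auto simp: NN_def)
  then have pw: "2 ^ floor_log (i-1) < (2::nat)^(m-1)" using floor_log_exp2_le[of "i-1"] by linarith
  then have "floor_log (i-1) < m - 1" using power_less_imp_less_exp[OF _ pw] by simp
  then show ?thesis using False assms by (simp add: atype_def)
qed (use assms in \<open>simp add: atype_def\<close>)

lemma atype_eq_D: assumes "atype i = j" "j \<ge> 1" shows "i \<ge> 2" "2^(j-1) \<le> i - 1"
proof -
  show "i \<ge> 2" using assms by (auto simp: atype_def split: if_splits)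
  then have "floor_log (i-1) = j - 1" using assms by (auto simp: atype_def)
  then show "2^(j-1) \<le> i - 1" using floor_log_exp2_le[of "i-1"] \<open>i \<ge> 2\<close> by auto
qed

lemma atype_small: assumes "i < 2^(j-1) + 1" "j \<ge> 1" shows "atype i < j"
proof (cases "i < 2")
  case False
  then have "i - 1 > 0" "i - 1 < 2^(j-1)" using assms by auto
  then have pw: "2 ^ floor_log (i-1) < (2::nat)^(j-1)" using floor_log_exp2_le[of "i-1"] by linarith
  then have "floor_log (i-1) < j - 1" using power_less_imp_less_exp[OF _ pw] by simp
  then show ?thesis using False assms by (simp add: atype_def)
qed (use assms in \<open>simp add: atype_def\<close>)

lemma atype_top: assumes "m \<ge> 2" "2^(m-2) + 1 \<le> i" "i < 2^(m-1) + 1" shows "atype i = m - 1"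
proof -
  have "(1::nat) \<le> 2^(m-2)" by simp
  then have "i \<ge> 2" using assms by linarith
  have "floor_log (i - 1) = m - 2"
    apply (rule floor_log_eqI) using assms \<open>i \<ge> 2\<close> by (auto simp flip: power_Suc simp: Suc_diff_Suc numeral_2_eq_2)
  then show ?thesis using \<open>i \<ge> 2\<close> assms by (simp add: atype_def)
qed

lemma card_lt: assumes "1 \<le> j" "j < m"
  shows "card {i\<in>{..<NN m}. atype i = j} < card {i\<in>{..<NN m}. atype i < j}"
proof -
  let ?E = "{i\<in>{..<NN m}. atype i = j}" and ?L = "{i\<in>{..<NN m}. atype i < j}"
  let ?phi = "\<lambda>i. i - 2^(j-1)"
  have inj: "inj_on ?phi ?E"
  proof (rule inj_onI)
    fix x y assume x: "x \<in> ?E" and y: "y \<in> ?E" and e: "?phi x = ?phi y"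
    have "2^(j-1) \<le> x - 1" "2^(j-1) \<le> y - 1" "x \<ge> 2" "y \<ge> 2"
      using atype_eq_D[of x j] atype_eq_D[of y j] x y assms by auto
    then show "x = y" using e by linarith
  qed
  have sub: "?phi ` ?E \<subseteq> ?L - {0}"
  proof
    fix x assume "x \<in> ?phi ` ?E"
    then obtain i where i: "i \<in> ?E" "x = ?phi i" by blast
    have a: "i \<ge> 2" "2^(j-1) \<le> i - 1" using atype_eq_D[of i j] i assms by auto
    have "i < 2^j + 1"
    proof -
      have "floor_log (i-1) = j - 1" using i a by (auto simp: atype_def)
      then have "i - 1 < 2 * 2^(j-1)" using floor_log_exp2_gt[of "i-1"] by simp
      then show ?thesis using assms by (cases j) auto
    qed
    then have "x < 2^(j-1) + 1" using i a assms by (cases j) auto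
    then have "atype x < j" using atype_small assms by blast
    moreover have "x < NN m" using i a by auto
    moreover have "x \<noteq> 0" using i a by auto
    ultimately show "x \<in> ?L - {0}" by auto
  qed
  have "card ?E = card (?phi ` ?E)" using card_image[OF inj] by simp
  also have "\<dots> \<le> card (?L - {0})" by (rule card_mono) (use sub in auto)
  also have "\<dots> < card ?L"
    by (rule card_Diff1_less) (use assms in \<open>auto simp: NN_def atype_def\<close>)
  finally show ?thesis .
qed


definition delta :: "nat \<Rightarrow> nat \<Rightarrow> nat \<Rightarrow> real" where
  "delta j t X = (if t < j then (if X < j then 0 else 2) else if t = j then 1
      else (if X < j \<or> X = t then 1 else 3))"

definition dm :: "nat \<Rightarrow> nat + nat \<Rightarrow> nat + nat \<Rightarrow> real" where
  "dm j x y = (case x of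
     Inl a \<Rightarrow> (case y of
        Inl b \<Rightarrow> (if a = b then 0 else if atype a < j \<and> atype b < j then 0
                     else if atype a < j \<or> atype b < j then 1 else 2)
      | Inr X \<Rightarrow> delta j (atype a) X)
   | Inr X \<Rightarrow> (case y of
        Inl b \<Rightarrow> delta j (atype b) X
      | Inr Y \<Rightarrow> (if X = Y then 0 else if X < j \<and> Y < j then 0 else 2)))"

lemma dm_pm: "pseudometric_on S (dm j)"
  unfolding pseudometric_on_def
proof (intro conjI ballI)
  fix x assume "x \<in> S" show "dm j x x = 0" by (cases x) (auto simp: dm_def)
next
  fix x y assume "x \<in> S" "y \<in> S"
  show "0 \<le> dm j x y" by (cases x; cases y) (auto simp: dm_def delta_def)
  show "dm j x y = dm j y x" by (cases x; cases y) (auto simp: dm_def)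
next
  fix x y z assume "x \<in> S" "y \<in> S" "z \<in> S"
  show "dm j x z \<le> dm j x y + dm j y z"
    by (cases x; cases y; cases z) (auto simp: dm_def delta_def)
qed


lemma len_prof[simp]: "length (prof m) = NN m" by (simp add: prof_def)
lemma nth_prof[simp]: "i < NN m \<Longrightarrow> prof m ! i = rk m (atype i)" by (simp add: prof_def)

lemma valid_prof: "m \<ge> 2 \<Longrightarrow> valid_profile m (prof m)"
  unfolding valid_profile_def
proof (intro conjI ballI)
  assume m: "m \<ge> 2"
  show "1 \<le> m" using m by simp
  show "prof m \<noteq> []" by (simp add: prof_def NN_def)
  fix r assume "r \<in> set (prof m)"
  then obtain i where "i < NN m" "r = rk m (atype i)" by (auto simp: prof_def)
  then show "is_ranking m r" using rk_ranking atype_lt m by blast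
qed

lemma delta_mono: "1 \<le> j \<Longrightarrow> key t X < key t Y \<Longrightarrow> delta j t X \<le> delta j t Y"
  by (auto simp: key_def delta_def split: if_splits)

lemma mc: assumes "1 \<le> j" shows "metric_consistent m (prof m) (dm j)"
  unfolding metric_consistent_def
proof (intro conjI allI impI)
  show "pseudometric_on (points (length (prof m)) m) (dm j)" by (rule dm_pm)
next
  fix i X Y assume i: "i < length (prof m)" and "X < m" "Y < m" and p: "prefers (prof m ! i) X Y"
  then have "key (atype i) X < key (atype i) Y" using prefers_key by auto
  then show "dm j (Inl i) (Inr X) \<le> dm j (Inl i) (Inr Y)"
    using delta_mono[OF assms] by (simp add: dm_def)
qed

lemma SC_eq: "SC X (prof m) (dm j) = (\<Sum>i<NN m. delta j (atype i) X)"
  by (simp add: SC_def dm_def)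

lemma sum_ind: "(\<Sum>i<(n::nat). 2 * of_bool (P i) - 2 * of_bool (Q i)) =
   2 * real (card ({..<n} \<inter> {i. P i})) - 2 * real (card ({..<n} \<inter> {i. Q i}))"
proof -
  have "(\<Sum>i<n. 2 * of_bool (P i) - 2 * (of_bool (Q i)::real)) =
     (\<Sum>i<n. 2 * of_bool (P i)) - (\<Sum>i<n. 2 * of_bool (Q i))" by (rule sum_subtractf)
  also have "\<dots> = 2 * (\<Sum>i<n. of_bool (P i)) - 2 * (\<Sum>i<n. of_bool (Q i))"
    by (simp only: sum_distrib_left)
  also have "\<dots> = 2 * real (card ({..<n} \<inter> {i. P i})) - 2 * real (card ({..<n} \<inter> {i. Q i}))"
  proof -
    have e: "\<And>R. (\<Sum>i<n. (of_bool (R i)::real)) = real (card ({..<n} \<inter> {i. R i}))"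
      by (subst sum_of_bool_eq) auto
    show ?thesis by (simp only: e)
  qed
  finally show ?thesis .
qed

lemma SC_ineq: assumes "1 \<le> j" "j < m"
  shows "SC j (prof m) (dm j) > 3 * SC 0 (prof m) (dm j)"
proof -
  let ?A = "{..<NN m}"
  have "SC j (prof m) (dm j) - 3 * SC 0 (prof m) (dm j)
      = (\<Sum>i\<in>?A. delta j (atype i) j - 3 * delta j (atype i) 0)"
    unfolding SC_eq by (simp only: sum_subtractf sum_distrib_left)
  also have "\<dots> = (\<Sum>i\<in>?A. 2 * of_bool (atype i < j) - 2 * of_bool (atype i = j))"
    by (rule sum.cong) (use assms in \<open>auto simp: delta_def\<close>)
  also have "\<dots> = 2 * real (card (?A \<inter> {i. atype i < j})) - 2 * real (card (?A \<inter> {i. atype i = j}))"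
    by (rule sum_ind)
  also have "\<dots> > 0"
  proof -
    have "card (?A \<inter> {i. atype i = j}) < card (?A \<inter> {i. atype i < j})"
    proof -
      have "\<And>Q. {i\<in>?A. Q i} = ?A \<inter> {i. Q i}" by auto
      then show ?thesis using card_lt[OF assms] by metis
    qed
    then show ?thesis by linarith
  qed
  finally show ?thesis by simp
qed

lemma SC_nonneg: "0 \<le> SC X (prof m) (dm j)"
  by (auto simp: SC_def dm_def delta_def intro!: sum_nonneg)

lemma metric_case: assumes "1 \<le> j" "j < m" "f m (prof m) = j"
  shows "metric_distortion f m > 3"
proof -
  let ?P = "prof m" and ?d = "dm j"
  let ?Mn = "Min ((\<lambda>X. SC X ?P ?d) ` {..<m})"
  have mn0: "?Mn \<le> SC 0 ?P ?d" using assms by (intro Min_le) auto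
  have mnge: "0 \<le> ?Mn" using assms SC_nonneg by (subst Min_ge_iff) auto
  have gt: "SC j ?P ?d > 3 * SC 0 ?P ?d" by (rule SC_ineq[OF assms(1,2)])
  have r: "ratio (SC j ?P ?d) ?Mn > 3"
  proof (cases "?Mn = 0")
    case True
    have "SC j ?P ?d > 0" using gt SC_nonneg[of 0 m j] by linarith
    then show ?thesis using True by (simp add: ratio_def)
  next
    case False
    then have pos: "?Mn > 0" using mnge by linarith
    have "3 * ?Mn < SC j ?P ?d" using gt mn0 by linarith
    then have "3 < SC j ?P ?d / ?Mn" using pos by (simp add: field_simps)
    then show ?thesis using False by (simp add: ratio_def)
  qed
  have mem: "ratio (SC (f m ?P) ?P ?d) ?Mn \<in> {ratio (SC (f m P) P d) (Min ((\<lambda>X. SC X P d) ` {..<m})) | P d.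
      valid_profile m P \<and> metric_consistent m P d}"
    using assms valid_prof[of m] mc[OF assms(1), of m] by auto
  show ?thesis unfolding metric_distortion_def less_Sup_iff
    using mem r assms(3) by auto
qed


definition uu :: "nat \<Rightarrow> nat \<Rightarrow> nat \<Rightarrow> real" where
  "uu m i X = (if atype i = 0 then 1 / real m else if X = atype i then 1 else 0)"

lemma uc: assumes "m \<ge> 2" shows "utility_consistent m (prof m) (uu m)"
proof -
  have A: "(\<forall>X<m. 0 \<le> uu m i X) \<and> (\<Sum>X<m. uu m i X) = 1" if i: "i < length (prof m)" for i
  proof
    show "\<forall>X<m. 0 \<le> uu m i X" by (simp add: uu_def)
    have t: "atype i < m" using atype_lt assms i by simp
    show "(\<Sum>X<m. uu m i X) = 1"
    proof (cases "atype i = 0")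
      case True then show ?thesis using assms by (simp add: uu_def)
    next
      case False then show ?thesis using t by (simp add: uu_def)
    qed
  qed
  have B: "uu m i Y \<le> uu m i X" if i: "i < length (prof m)" and p: "prefers (prof m ! i) X Y" for i X Y
  proof -
    have "key (atype i) X < key (atype i) Y" using prefers_key i p by auto
    then show ?thesis by (auto simp: uu_def key_def split: if_splits)
  qed
  show ?thesis unfolding utility_consistent_def using A B by blast
qed

lemma atype0: "atype i = 0 \<longleftrightarrow> i < 2" by (simp add: atype_def)

lemma SW0: assumes "m \<ge> 2" shows "SW 0 (prof m) (uu m) = 2 / real m"
proof -
  have NN: "2 \<le> NN m" by (simp add: NN_def)
  have "SW 0 (prof m) (uu m) = (\<Sum>i<NN m. if i < 2 then 1 / real m else 0)"
    unfolding SW_def by (rule sum.cong) (auto simp: uu_def atype0)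
  also have "\<dots> = (\<Sum>i<(2::nat). if i < 2 then 1 / real m else 0)"
    by (rule sum.mono_neutral_right) (use NN in auto)
  also have "\<dots> = 2 / real m" by (simp add: numeral_2_eq_2)
  finally show ?thesis .
qed

lemma SWtop: assumes "m \<ge> 2" shows "SW (m-1) (prof m) (uu m) \<ge> 2^(m-2)"
proof -
  let ?B = "{2^(m-2)+1..<2^(m-1)+1::nat}"
  have card: "card ?B = 2^(m-2)"
  proof -
    have "(2::nat)^(m-1) = 2 * 2^(m-2)" using assms
      by (metis Suc_diff_Suc Suc_1 diff_Suc_1 le_add_diff_inverse2 lessI less_le_trans power_Suc numeral_2_eq_2 plus_1_eq_Suc)
    then show ?thesis by simp
  qed
  have "real (card ?B) = (\<Sum>i\<in>?B. uu m i (m-1))"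
    using atype_top[OF assms] assms by (simp add: uu_def)
  also have "\<dots> \<le> (\<Sum>i<NN m. uu m i (m-1))"
    by (rule sum_mono2) (auto simp: uu_def NN_def)
  finally have ineq: "real (card ?B) \<le> (\<Sum>i<NN m. uu m i (m-1))" .
  have c2: "real (card ?B) = 2^(m-2)" using card by simp
  show ?thesis unfolding SW_def len_prof using ineq c2 by linarith
qed

lemma pow_big: "16 \<le> m \<Longrightarrow> 2*m^2 < (2::nat)^(m-2)"
proof (induction m rule: dec_induct)
  case base then show ?case by simp
next
  case (step k)
  have a: "k*k \<ge> 16*k" using step(1) by simp
  have sq: "(Suc k)^2 = k*k + 2*k + 1" "k^2 = k*k" by (simp_all add: power2_eq_square)
  have "2*(Suc k)^2 \<le> 2*(2*k^2)"
  proof -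
    define q where "q = k * k"
    have "16 * k \<le> q" "16 \<le> k" using a step(1) q_def by auto
    then have "2 * (q + 2 * k + 1) \<le> 2 * (2 * q)" by arith
    then show ?thesis unfolding sq q_def .
  qed
  also have "\<dots> < 2 * 2^(k-2)" using step(3) by simp
  also have "\<dots> = 2^(Suc k - 2)"
  proof -
    have e: "Suc k - 2 = Suc (k - 2)" using step(1) by arith
    show ?thesis unfolding e by simp
  qed
  finally show ?case .
qed

lemma real_big: assumes "16 \<le> m" shows "real m ^ 2 * sqrt (real m) < 2^(m-2) * real m / 2"
proof -
  have "real (2*m^2) < real (2^(m-2))" using pow_big[OF assms] by linarith
  then have b: "2 * real m ^ 2 < 2^(m-2)" by simp
  have s: "sqrt (real m) \<le> real m"
    using assms by (intro real_sqrt_le_iff[THEN iffD2, of "real m" "real m ^ 2", simplified] ) (auto simp: power2_eq_square)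
  have "real m ^ 2 * sqrt (real m) \<le> real m ^ 2 * real m" using s by (simp add: mult_left_mono)
  also have "\<dots> < 2^(m-2) * real m / 2" using b assms by (simp add: field_simps)
  finally show ?thesis .
qed

lemma util_case: assumes "m \<ge> 16" "f m (prof m) = 0"
  "utilitarian_distortion f m \<le> ereal (1 * (real m ^ 2 * sqrt (real m)))"
  shows False
proof -
  let ?P = "prof m" and ?u = "uu m"
  let ?Mx = "Max ((\<lambda>X. SW X ?P ?u) ` {..<m})"
  have m2: "m \<ge> 2" using assms by simp
  have mem: "ratio ?Mx (SW (f m ?P) ?P ?u) \<in> {ratio (Max ((\<lambda>X. SW X P u) ` {..<m})) (SW (f m P) P u) | P u.
      valid_profile m P \<and> utility_consistent m P u}"
    unfolding mem_Collect_eq by (intro exI[of _ "prof m"] exI[of _ "uu m"]) (use valid_prof[OF m2] uc[OF m2] in simp)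
  have le0: "ratio ?Mx (SW (f m ?P) ?P ?u) \<le> utilitarian_distortion f m"
    unfolding utilitarian_distortion_def by (rule Sup_upper[OF mem])
  have le: "ratio ?Mx (SW 0 ?P ?u) \<le> utilitarian_distortion f m"
    using le0 unfolding assms(2) .
  have mx: "?Mx \<ge> 2^(m-2)"
  proof -
    have "SW (m-1) ?P ?u \<le> ?Mx" using m2 by (intro Max_ge) auto
    then show ?thesis using SWtop[OF m2] by linarith
  qed
  have r: "ratio ?Mx (SW 0 ?P ?u) = ereal (?Mx / (2 / real m))"
    using SW0[OF m2] m2 by (simp add: ratio_def)
  have "2^(m-2) * real m / 2 \<le> ?Mx / (2 / real m)"
    using mx m2 by (simp add: field_simps)
  then have "ereal (2^(m-2) * real m / 2) \<le> ratio ?Mx (SW 0 ?P ?u)"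
    unfolding r by simp
  also note le
  also note assms(3)
  finally have "ereal (2^(m-2) * real m / 2) \<le> ereal (1 * (real m ^ 2 * sqrt (real m)))" .
  then show False using real_big[OF assms(1)] by simp
qed

lemma key_lemma: assumes "voting_rule f" "m \<ge> 16"
  "utilitarian_distortion f m \<le> ereal (1 * (real m ^ 2 * sqrt (real m)))"
  shows "metric_distortion f m > 3"
proof -
  have m2: "m \<ge> 2" using assms by simp
  have lt: "f m (prof m) < m" using assms(1) valid_prof[OF m2] by (simp add: voting_rule_def)
  show ?thesis
  proof (cases "f m (prof m) = 0")
    case True then show ?thesis using util_case[OF assms(2) True assms(3)] by simp
  next
    case False then show ?thesis using metric_case[of "f m (prof m)" m f] lt by simp
  qed
qed

theorem mainTheorem4:
  fixes f :: "nat \<Rightarrow> nat list list \<Rightarrow> nat"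
  assumes "voting_rule f"
    and "\<forall>c>0. eventually (\<lambda>m. utilitarian_distortion f m \<le> ereal (c * (real m ^ 2 * sqrt (real m)))) sequentially"
  shows "eventually (\<lambda>m. metric_distortion f m > 3) sequentially"
proof -
  have ev: "eventually (\<lambda>m. utilitarian_distortion f m \<le> ereal (1 * (real m ^ 2 * sqrt (real m)))) sequentially"
    using assms(2) zero_less_one by blast
  show ?thesis
    by (rule eventually_mono[OF eventually_conj[OF ev eventually_ge_at_top[of 16]]])
       (use key_lemma[OF assms(1)] in auto)
qed

end
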